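(* Let $r$ be a positive integer, $A=A_r$, and let $M$ be the $\aleph_1$-separable group (right $A$-module) constructed as in the context, with $A$ regarded as a subring of $\operatorname{End}(M)$ via its action on $M$. If $A$ is algebraically closed in $\operatorname{End}(M)$, then for any positive integers $m$ and $k$, $M^m$ is isomorphic to $M^k$ if and only if $m\equiv k\pmod r$.
   Context: $A=A_r$ is the ring freely generated by $\rho_i,\sigma_i$ ($i=0,\dots,r$) subject to $\rho_j\sigma_i=\delta_{ij}$ and $\sum_{i=0}^r\sigma_i\rho_i=1$; it is free as an abelian group. Let $G$ be Corner's countable torsion-free abelian group: a right $A$-module whose endomorphism ring is $A$ (acting by right multiplication), with $\operatorname{Hom}(G,\mathbf{Z})=0$ and $G^\ell\not\cong G^n$ for $1\le\ell<n\le r$. Let $B\subseteq H$ be countable free right $A$-modules with $H/B\cong G$, $B=\bigcup_{n\in\omega}B_n$ an increasing chain with $B_0=0$ and $H/B_n$, $B_{n+1}/B_n$ free of rank $\omega$ for all $n$. Fix for each $n$ elements $b_{n,i}\in B_{n+1}$ ($i\in\omega$) such that $\{b_{n,i}+B_n\}$ is an $A$-basis of $B_{n+1}/B_n$ (so $\{b_{n,i}\}$ is a basis of $B$). Fix a stationary set $E\subseteq\omega_1$ of limit ordinals and a tree-like ladder system $\{\eta_\delta:\delta\in E\}$: each $\eta_\delta:\omega\to\delta$ is strictly increasing with range cofinal in $\delta$ and disjoint from $E$, and $\eta_\delta(n)=\eta_\gamma(m)$ implies $m=n$ and $\eta_\delta(l)=\eta_\gamma(l)$ for all $l<n$. Define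 right $A$-modules $M_\beta$ ($\beta<\omega_1$) inductively: $M_0=0$; $M_\beta=\bigcup_{\alpha<\beta}M_\alpha$ for limit $\beta$; if $\alpha\notin E$, $M_{\alpha+1}=M_\alpha\oplus\bigoplus_{i\in\omega}x_{\alpha,i}A$ with new free generators $x_{\alpha,i}$; if $\delta\in E$, let $\iota_\delta:B\to M_\delta$ be the $A$-linear map with $b_{n,i}\mapsto x_{\eta_\delta(n),i}$ and let $M_{\delta+1}$ be the pushout of $\iota_\delta$ and the inclusion $B\hookrightarrow H$ (so $M_\delta\subseteq M_{\delta+1}$, there is an embedding $\theta_\delta:H\to M_{\delta+1}$ extending $\iota_\delta$, and $M_{\delta+1}/M_\delta\cong H/B$). Put $M=\bigcup_{\beta<\omega_1}M_\beta$. An abelian group is $\aleph_1$-separable if every countable subset lies in a countable free direct summand. $M^m$ is the direct sum of $m$ copies of $M$. A subring $A$ of a ring $R$ is algebraically closed in $R$ if every finite system of ring equations (polynomials in several noncommuting variables with coefficients from $A$) that has a solution in $R$ has a solution in $A$. *)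

theory Defs
  imports Main "HOL-Library.Countable_Set"
begin

datatype ('v, 'c) ncterm = V 'v | C 'c
  | Plus "('v, 'c) ncterm" "('v, 'c) ncterm"
  | Neg "('v, 'c) ncterm"
  | Times "('v, 'c) ncterm" "('v, 'c) ncterm"

primrec nceval :: "('r \<Rightarrow> 'r \<Rightarrow> 'r) \<Rightarrow> ('r \<Rightarrow> 'r) \<Rightarrow> ('r \<Rightarrow> 'r \<Rightarrow> 'r)
    \<Rightarrow> ('c \<Rightarrow> 'r) \<Rightarrow> ('v \<Rightarrow> 'r) \<Rightarrow> ('v, 'c) ncterm \<Rightarrow> 'r" where
  "nceval pl ng tm cst var (V v) = var v"
| "nceval pl ng tm cst var (C c) = cst c"
| "nceval pl ng tm cst var (Plus s t) = pl (nceval pl ng tm cst var s) (nceval pl ng tm cst var t)"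
| "nceval pl ng tm cst var (Neg s) = ng (nceval pl ng tm cst var s)"
| "nceval pl ng tm cst var (Times s t) = tm (nceval pl ng tm cst var s) (nceval pl ng tm cst var t)"

primrec ncvars :: "('v, 'c) ncterm \<Rightarrow> 'v set" where
  "ncvars (V v) = {v}"
| "ncvars (C c) = {}"
| "ncvars (Plus s t) = ncvars s \<union> ncvars t"
| "ncvars (Neg s) = ncvars s"
| "ncvars (Times s t) = ncvars s \<union> ncvars t"

definition ring_eval :: "('c \<Rightarrow> 'a::ring_1) \<Rightarrow> ('v \<Rightarrow> 'a) \<Rightarrow> ('v, 'c) ncterm \<Rightarrow> 'a" where
  "ring_eval cst var = nceval (+) uminus (*) cst var"

definition additive :: "('x::ab_group_add \<Rightarrow> 'y::ab_group_add) \<Rightarrow> bool" where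
  "additive f \<longleftrightarrow> (\<forall>x y. f (x + y) = f x + f y)"

definition right_module :: "('m::ab_group_add \<Rightarrow> 'a::ring_1 \<Rightarrow> 'm) \<Rightarrow> bool" where
  "right_module sm \<longleftrightarrow> (\<forall>x y a b.
      sm (x + y) a = sm x a + sm y a \<and> sm x (a + b) = sm x a + sm x b \<and>
      sm x (a * b) = sm (sm x a) b \<and> sm x 1 = x)"

definition submodule :: "('m::ab_group_add \<Rightarrow> 'a::ring_1 \<Rightarrow> 'm) \<Rightarrow> 'm set \<Rightarrow> bool" where
  "submodule sm S \<longleftrightarrow> 0 \<in> S \<and> (\<forall>x\<in>S. \<forall>y\<in>S. x + y \<in> S) \<and> (\<forall>x\<in>S. - x \<in> S)
      \<and> (\<forall>x\<in>S. \<forall>a. sm x a \<in> S)"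

definition module_hom :: "('m::ab_group_add \<Rightarrow> 'a::ring_1 \<Rightarrow> 'm) \<Rightarrow> ('n::ab_group_add \<Rightarrow> 'a \<Rightarrow> 'n)
    \<Rightarrow> ('m \<Rightarrow> 'n) \<Rightarrow> bool" where
  "module_hom sm sn f \<longleftrightarrow> additive f \<and> (\<forall>x a. f (sm x a) = sn (f x) a)"

definition lincomb :: "('m::ab_group_add \<Rightarrow> 'a::ring_1 \<Rightarrow> 'm) \<Rightarrow> (nat \<Rightarrow> 'm) \<Rightarrow> (nat \<Rightarrow> 'a) \<Rightarrow> 'm" where
  "lincomb sm e c = (\<Sum>i\<in>{i. c i \<noteq> 0}. sm (e i) (c i))"

text \<open>free_over sm X Y e: (for submodules Y \<subseteq> X) the cosets e i + Y form an A-basis of X/Y,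
  i.e. X/Y is free of rank omega with this basis.\<close>
definition free_over :: "('m::ab_group_add \<Rightarrow> 'a::ring_1 \<Rightarrow> 'm) \<Rightarrow> 'm set \<Rightarrow> 'm set \<Rightarrow> (nat \<Rightarrow> 'm) \<Rightarrow> bool" where
  "free_over sm X Y e \<longleftrightarrow> (\<forall>i. e i \<in> X) \<and>
     (\<forall>x\<in>X. \<exists>!c. finite {i. c i \<noteq> 0} \<and> x - lincomb sm e c \<in> Y)"

definition dpow :: "nat \<Rightarrow> (nat \<Rightarrow> 'x::zero) set" where
  "dpow k = {f. \<forall>i\<ge>k. f i = 0}"

definition grp_iso :: "(nat \<Rightarrow> 'x::ab_group_add) set \<Rightarrow> (nat \<Rightarrow> 'x) set \<Rightarrow> bool" where
  "grp_iso S T \<longleftrightarrow> (\<exists>\<phi>. bij_betw \<phi> S T \<and>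
     (\<forall>u\<in>S. \<forall>v\<in>S. \<phi> (\<lambda>i. u i + v i) = (\<lambda>i. \<phi> u i + \<phi> v i)))"

section \<open>The ring A_r by generators and relations\<close>

datatype gen = Rho nat | Sig nat

primrec gen_val :: "(nat \<Rightarrow> 'a) \<Rightarrow> (nat \<Rightarrow> 'a) \<Rightarrow> gen \<Rightarrow> 'a" where
  "gen_val rho sigma (Rho i) = rho i"
| "gen_val rho sigma (Sig i) = sigma i"

primrec gen_ok :: "nat \<Rightarrow> gen \<Rightarrow> bool" where
  "gen_ok r (Rho i) \<longleftrightarrow> i \<le> r"
| "gen_ok r (Sig i) \<longleftrightarrow> i \<le> r"

definition sum_rel_term :: "nat \<Rightarrow> (gen, int) ncterm" where
  "sum_rel_term r = foldr Plus (map (\<lambda>i. Times (V (Sig i)) (V (Rho i))) [0..<Suc r]) (C 0)"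

text \<open>Derivable equality in the ring presented by the generators rho_i, sigma_i and the
  relations of A_r (congruence generated by the ring axioms, integer constants and the relations).\<close>
inductive prov :: "nat \<Rightarrow> (gen, int) ncterm \<Rightarrow> (gen, int) ncterm \<Rightarrow> bool" for r where
  refl: "prov r t t"
| sym: "prov r s t \<Longrightarrow> prov r t s"
| trans: "prov r s t \<Longrightarrow> prov r t u \<Longrightarrow> prov r s u"
| cong_plus: "prov r s s' \<Longrightarrow> prov r t t' \<Longrightarrow> prov r (Plus s t) (Plus s' t')"
| cong_neg: "prov r s s' \<Longrightarrow> prov r (Neg s) (Neg s')"
| cong_times: "prov r s s' \<Longrightarrow> prov r t t' \<Longrightarrow> prov r (Times s t) (Times s' t')"
| plus_assoc: "prov r (Plus (Plus s t) u) (Plus s (Plus t u))"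
| plus_comm: "prov r (Plus s t) (Plus t s)"
| plus_zero: "prov r (Plus (C 0) t) t"
| plus_neg: "prov r (Plus t (Neg t)) (C 0)"
| times_assoc: "prov r (Times (Times s t) u) (Times s (Times t u))"
| times_one_l: "prov r (Times (C 1) t) t"
| times_one_r: "prov r (Times t (C 1)) t"
| distrib_l: "prov r (Times s (Plus t u)) (Plus (Times s t) (Times s u))"
| distrib_r: "prov r (Times (Plus s t) u) (Plus (Times s u) (Times t u))"
| const_plus: "prov r (C (k + l)) (Plus (C k) (C l))"
| const_times: "prov r (C (k * l)) (Times (C k) (C l))"
| const_neg: "prov r (C (- k)) (Neg (C k))"
| rel_rho_sigma: "i \<le> r \<Longrightarrow> j \<le> r \<Longrightarrow>
     prov r (Times (V (Rho j)) (V (Sig i))) (C (if i = j then 1 else 0))"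
| rel_sum: "prov r (sum_rel_term r) (C 1)"

text \<open>(A, rho, sigma) is the ring A_r: the relations hold, A is generated by the rho_i, sigma_i,
  and every equality between such expressions in A is a consequence of the ring axioms and
  the defining relations (i.e. A is the ring freely generated subject to the relations).\<close>
definition is_Ar :: "nat \<Rightarrow> (nat \<Rightarrow> 'a::ring_1) \<Rightarrow> (nat \<Rightarrow> 'a) \<Rightarrow> bool" where
  "is_Ar r rho sigma \<longleftrightarrow>
     (\<forall>i\<le>r. \<forall>j\<le>r. rho j * sigma i = (if i = j then 1 else 0)) \<and>
     (\<Sum>i\<le>r. sigma i * rho i) = 1 \<and>
     (\<forall>a::'a. \<exists>t. (\<forall>g\<in>ncvars t. gen_ok r g) \<and> ring_eval of_int (gen_val rho sigma) t = a) \<and>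
     (\<forall>s t. (\<forall>g\<in>ncvars s. gen_ok r g) \<longrightarrow> (\<forall>g\<in>ncvars t. gen_ok r g) \<longrightarrow>
        ring_eval of_int (gen_val rho sigma) s = ring_eval of_int (gen_val rho sigma) t \<longrightarrow>
        prov r s t)"

definition corner_group :: "nat \<Rightarrow> ('g::ab_group_add \<Rightarrow> 'a::ring_1 \<Rightarrow> 'g) \<Rightarrow> bool" where
  "corner_group r sm \<longleftrightarrow> right_module sm \<and> countable (UNIV :: 'g set) \<and>
     (\<forall>n::nat. \<forall>g::'g. 0 < n \<longrightarrow> (\<Sum>_<n. g) = 0 \<longrightarrow> g = 0) \<and>
     (\<forall>f::'g \<Rightarrow> 'g. additive f \<longrightarrow> (\<exists>!a. f = (\<lambda>g. sm g a))) \<and>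
     (\<forall>f::'g \<Rightarrow> int. additive f \<longrightarrow> (\<forall>g. f g = 0)) \<and>
     (\<forall>l n. 1 \<le> l \<longrightarrow> l < n \<longrightarrow> n \<le> r \<longrightarrow>
        \<not> grp_iso (dpow l :: (nat \<Rightarrow> 'g) set) (dpow n))"

section \<open>The modules B \<subseteq> H\<close>

definition HB_data :: "('h::ab_group_add \<Rightarrow> 'a::ring_1 \<Rightarrow> 'h) \<Rightarrow> (nat \<Rightarrow> 'h set)
    \<Rightarrow> (nat \<Rightarrow> nat \<Rightarrow> 'h) \<Rightarrow> bool" where
  "HB_data sm Bn b \<longleftrightarrow> right_module sm \<and>
     (\<forall>n. submodule sm (Bn n)) \<and> Bn 0 = {0} \<and> (\<forall>n. Bn n \<subseteq> Bn (Suc n)) \<and>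
     (\<forall>n. \<exists>e. free_over sm UNIV (Bn n) e) \<and>
     (\<forall>n. free_over sm (Bn (Suc n)) (Bn n) (b n))"

text \<open>The index type 'i is (order-isomorphic to) omega_1.\<close>
definition omega1_type :: "'i::wellorder itself \<Rightarrow> bool" where
  "omega1_type _ \<longleftrightarrow> \<not> countable (UNIV :: 'i set) \<and> (\<forall>a::'i. countable {..<a})"

definition ord_zero :: "'i::wellorder" where
  "ord_zero = (LEAST x. True)"

definition ord_succ :: "'i::wellorder \<Rightarrow> 'i" where
  "ord_succ a = (LEAST b. a < b)"

definition is_limit :: "'i::wellorder \<Rightarrow> bool" where
  "is_limit d \<longleftrightarrow> d \<noteq> ord_zero \<and> (\<forall>a<d. \<exists>b. a < b \<and> b < d)"

definition club :: "'i::wellorder set \<Rightarrow> bool" where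
  "club S \<longleftrightarrow> (\<forall>a. \<exists>b\<in>S. a < b) \<and>
     (\<forall>d. is_limit d \<longrightarrow> (\<forall>a<d. \<exists>b\<in>S. a < b \<and> b < d) \<longrightarrow> d \<in> S)"

definition stationary :: "'i::wellorder set \<Rightarrow> bool" where
  "stationary E \<longleftrightarrow> (\<forall>S. club S \<longrightarrow> E \<inter> S \<noteq> {})"

definition ladder_system :: "'i::wellorder set \<Rightarrow> ('i \<Rightarrow> nat \<Rightarrow> 'i) \<Rightarrow> bool" where
  "ladder_system E eta \<longleftrightarrow>
     (\<forall>d\<in>E. strict_mono (eta d) \<and> (\<forall>n. eta d n < d) \<and> (\<forall>a<d. \<exists>n. a < eta d n)
        \<and> (\<forall>n. eta d n \<notin> E)) \<and>
     (\<forall>d\<in>E. \<forall>g\<in>E. \<forall>n m. eta d n = eta g m \<longrightarrow> m = n \<and> (\<forall>l<n. eta d l = eta g l))"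

text \<open>Mf is the filtration (M_beta), x the free generators x_(alpha,i), th the maps theta_delta.
  The condition at delta in E says exactly that M_(delta+1) is the pushout of iota_delta and the
  inclusion B \<subseteq> H: theta_delta is A-linear, extends iota_delta (b_(n,i) \<mapsto> x_(eta_delta(n),i)),
  M_(delta+1) = M_delta + theta_delta(H), and theta_delta(h) \<in> M_delta iff h \<in> B.\<close>
definition M_construction :: "('h::ab_group_add \<Rightarrow> 'a::ring_1 \<Rightarrow> 'h) \<Rightarrow> 'h set \<Rightarrow> (nat \<Rightarrow> nat \<Rightarrow> 'h)
    \<Rightarrow> 'i::wellorder set \<Rightarrow> ('i \<Rightarrow> nat \<Rightarrow> 'i) \<Rightarrow> ('m::ab_group_add \<Rightarrow> 'a \<Rightarrow> 'm)
    \<Rightarrow> ('i \<Rightarrow> 'm set) \<Rightarrow> ('i \<Rightarrow> nat \<Rightarrow> 'm) \<Rightarrow> ('i \<Rightarrow> 'h \<Rightarrow> 'm) \<Rightarrow> bool" where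
  "M_construction smH B b E eta smM Mf x th \<longleftrightarrow>
     (\<forall>be. submodule smM (Mf be)) \<and>
     Mf ord_zero = {0} \<and>
     (\<forall>be. is_limit be \<longrightarrow> Mf be = (\<Union>a\<in>{..<be}. Mf a)) \<and>
     (\<forall>a. a \<notin> E \<longrightarrow> Mf a \<subseteq> Mf (ord_succ a) \<and> free_over smM (Mf (ord_succ a)) (Mf a) (x a)) \<and>
     (\<forall>d\<in>E. module_hom smH smM (th d) \<and>
        (\<forall>n i. th d (b n i) = x (eta d n) i) \<and>
        Mf (ord_succ d) = {m + th d h | m h. m \<in> Mf d} \<and>
        (\<forall>h. th d h \<in> Mf d \<longleftrightarrow> h \<in> B)) \<and>
     (\<Union>be. Mf be) = UNIV"

text \<open>End(M) with endomorphisms written on the right (as for right modules): the product f g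
  means first f, then g.  a \<in> A acts as right multiplication.\<close>
definition end_eval :: "('m::ab_group_add \<Rightarrow> 'a::ring_1 \<Rightarrow> 'm) \<Rightarrow> ('v \<Rightarrow> ('m \<Rightarrow> 'm))
    \<Rightarrow> ('v, 'a) ncterm \<Rightarrow> ('m \<Rightarrow> 'm)" where
  "end_eval sm F = nceval (\<lambda>f g m. f m + g m) (\<lambda>f m. - f m) (\<lambda>f g. g \<circ> f)
      (\<lambda>a m. sm m a) F"

definition alg_closed_in_End :: "('m::ab_group_add \<Rightarrow> 'a::ring_1 \<Rightarrow> 'm) \<Rightarrow> bool" where
  "alg_closed_in_End sm \<longleftrightarrow>
     (\<forall>ps :: (nat, 'a) ncterm list.
        (\<exists>F. (\<forall>v. additive (F v)) \<and> (\<forall>p\<in>set ps. end_eval sm F p = (\<lambda>_. 0))) \<longrightarrow>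
        (\<exists>s. \<forall>p\<in>set ps. ring_eval id s p = 0))"

end

theory Submission
  imports Defs
begin


lemma dpow_add: "(u::nat\<Rightarrow>'x::monoid_add) \<in> dpow n \<Longrightarrow> v \<in> dpow n \<Longrightarrow> (\<lambda>i. u i + v i) \<in> dpow n"
  by (auto simp add: dpow_def)

lemma dpow_zero: "(\<lambda>i. 0) \<in> dpow n"
  by (simp add: dpow_def)

lemma dpow_sum: "finite S \<Longrightarrow> (\<forall>j\<in>S. u j \<in> dpow n) \<Longrightarrow> (\<lambda>l. \<Sum>j\<in>S. u j l) \<in> dpow n"
  by (simp add: dpow_def)

lemma hom_zero:
  fixes h :: "(nat \<Rightarrow> 'x::ab_group_add) \<Rightarrow> (nat \<Rightarrow> 'y::ab_group_add)"
  assumes "(\<lambda>i. 0) \<in> S"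
    and "\<forall>u\<in>S. \<forall>v\<in>S. h (\<lambda>i. u i + v i) = (\<lambda>i. h u i + h v i)"
  shows "h (\<lambda>i. 0) = (\<lambda>i. 0)"
proof -
  have "h (\<lambda>i. 0 + 0) = (\<lambda>i. h (\<lambda>i. 0) i + h (\<lambda>i. 0) i)"
    using assms(2)[rule_format, OF assms(1) assms(1)] by simp
  then have "\<And>l. h (\<lambda>i. 0) l = h (\<lambda>i. 0) l + h (\<lambda>i. 0) l" by (metis add.right_neutral)
  then show ?thesis by (auto simp: fun_eq_iff)
qed

lemma hom_sum:
  fixes h :: "(nat \<Rightarrow> 'x::ab_group_add) \<Rightarrow> (nat \<Rightarrow> 'y::ab_group_add)"
  assumes fin: "finite S"
    and mem: "\<forall>j\<in>S. u j \<in> dpow n"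
    and add: "\<forall>u\<in>dpow n. \<forall>v\<in>dpow n. h (\<lambda>i. u i + v i) = (\<lambda>i. h u i + h v i)"
  shows "h (\<lambda>l. \<Sum>j\<in>S. u j l) = (\<lambda>l. \<Sum>j\<in>S. h (u j) l)"
  using fin mem
proof (induction S rule: finite_induct)
  case empty
  then show ?case using hom_zero[OF dpow_zero add] by simp
next
  case (insert x F)
  have m1: "u x \<in> dpow n" using insert by auto
  have m2: "(\<lambda>l. \<Sum>j\<in>F. u j l) \<in> dpow n" using insert dpow_sum by auto
  have "h (\<lambda>l. \<Sum>j\<in>insert x F. u j l) = h (\<lambda>l. u x l + (\<Sum>j\<in>F. u j l))"
    using insert by simp
  also have "\<dots> = (\<lambda>l. h (u x) l + h (\<lambda>l. \<Sum>j\<in>F. u j l) l)"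
    using add[rule_format, OF m1 m2] by simp
  also have "\<dots> = (\<lambda>l. \<Sum>j\<in>insert x F. h (u j) l)"
    using insert by simp
  finally show ?case .
qed

lemma inv_additive:
  fixes \<phi> :: "(nat \<Rightarrow> 'x::ab_group_add) \<Rightarrow> (nat \<Rightarrow> 'x)"
  assumes bij: "bij_betw \<phi> (dpow a) (dpow b)"
    and add: "\<forall>u\<in>dpow a. \<forall>v\<in>dpow a. \<phi> (\<lambda>i. u i + v i) = (\<lambda>i. \<phi> u i + \<phi> v i)"
  shows "\<forall>u\<in>dpow b. \<forall>v\<in>dpow b. inv_into (dpow a) \<phi> (\<lambda>i. u i + v i)
     = (\<lambda>i. inv_into (dpow a) \<phi> u i + inv_into (dpow a) \<phi> v i)"
proof (intro ballI)
  fix u v :: "nat \<Rightarrow> 'x" assume u: "u \<in> dpow b" and v: "v \<in> dpow b"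
  let ?p = "inv_into (dpow a) \<phi>"
  have bi: "bij_betw ?p (dpow b) (dpow a)" using bij by (rule bij_betw_inv_into)
  have pu: "?p u \<in> dpow a" by (rule bij_betw_apply[OF bi u])
  have pv: "?p v \<in> dpow a" by (rule bij_betw_apply[OF bi v])
  have fu: "\<phi> (?p u) = u" by (rule bij_betw_inv_into_right[OF bij u])
  have fv: "\<phi> (?p v) = v" by (rule bij_betw_inv_into_right[OF bij v])
  have s: "(\<lambda>i. ?p u i + ?p v i) \<in> dpow a" using dpow_add pu pv by blast
  have "\<phi> (\<lambda>i. ?p u i + ?p v i) = (\<lambda>i. u i + v i)"
    using add pu pv fu fv by simp
  then have "?p (\<lambda>i. u i + v i) = ?p (\<phi> (\<lambda>i. ?p u i + ?p v i))" by simp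
  also have "\<dots> = (\<lambda>i. ?p u i + ?p v i)"
    using bij s by (meson bij_betw_imp_inj_on inv_into_f_f)
  finally show "?p (\<lambda>i. u i + v i) = (\<lambda>i. ?p u i + ?p v i)" .
qed

lemma grp_iso_sym: "grp_iso (dpow a :: (nat \<Rightarrow> 'x::ab_group_add) set) (dpow b) \<Longrightarrow> grp_iso (dpow b :: (nat \<Rightarrow> 'x) set) (dpow a)"
  unfolding grp_iso_def using inv_additive bij_betw_inv_into by blast

lemma grp_iso_trans: "grp_iso (dpow a :: (nat \<Rightarrow> 'x::ab_group_add) set) (dpow b) \<Longrightarrow>
   grp_iso (dpow b :: (nat \<Rightarrow> 'x) set) (dpow c) \<Longrightarrow> grp_iso (dpow a :: (nat \<Rightarrow> 'x) set) (dpow c)"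
proof -
  assume "grp_iso (dpow a :: (nat \<Rightarrow> 'x::ab_group_add) set) (dpow b)" "grp_iso (dpow b :: (nat \<Rightarrow> 'x) set) (dpow c)"
  then obtain f g :: "(nat \<Rightarrow> 'x) \<Rightarrow> (nat \<Rightarrow> 'x)" where
    f: "bij_betw f (dpow a) (dpow b)" and fa: "\<forall>u\<in>dpow a. \<forall>v\<in>dpow a. f (\<lambda>i. u i + v i) = (\<lambda>i. f u i + f v i)"
    and g: "bij_betw g (dpow b) (dpow c)" and ga: "\<forall>u\<in>dpow b. \<forall>v\<in>dpow b. g (\<lambda>i. u i + v i) = (\<lambda>i. g u i + g v i)"
    unfolding grp_iso_def by blast
  have "bij_betw (g \<circ> f) (dpow a) (dpow c)" using f g bij_betw_trans by blast
  moreover have "\<forall>u\<in>dpow a. \<forall>v\<in>dpow a. (g \<circ> f) (\<lambda>i. u i + v i) = (\<lambda>i. (g \<circ> f) u i + (g \<circ> f) v i)"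
    using fa ga f by (simp add: bij_betw_apply)
  ultimately show ?thesis unfolding grp_iso_def by blast
qed

lemma rm_zero2: "right_module sm \<Longrightarrow> sm x 0 = 0"
  unfolding right_module_def by (metis add_cancel_right_right add.right_neutral)

lemma rm_zero1: "right_module sm \<Longrightarrow> sm 0 a = 0"
  unfolding right_module_def by (metis add_cancel_right_right add.right_neutral)

lemma rm_sum1: assumes "right_module sm" shows "finite S \<Longrightarrow> sm (\<Sum>i\<in>S. f i) a = (\<Sum>i\<in>S. sm (f i) a)"
  by (induction S rule: finite_induct) (use assms in \<open>auto simp: rm_zero1 right_module_def\<close>)

lemma rm_sum2: assumes "right_module sm" shows "finite S \<Longrightarrow> sm x (\<Sum>i\<in>S. f i) = (\<Sum>i\<in>S. sm x (f i))"
  by (induction S rule: finite_induct) (use assms in \<open>auto simp: rm_zero2 right_module_def\<close>)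

lemma rm_mult: "right_module sm \<Longrightarrow> sm (sm x a) b = sm x (a * b)"
  unfolding right_module_def by metis

lemma rm_one: "right_module sm \<Longrightarrow> sm x 1 = x"
  unfolding right_module_def by metis



lemma matrix_iso:
  fixes sm :: "'x::ab_group_add \<Rightarrow> 'a::ring_1 \<Rightarrow> 'x" and P Q :: "nat \<Rightarrow> nat \<Rightarrow> 'a"
  assumes rm: "right_module sm"
    and PQ: "\<forall>i<m. \<forall>i'<m. (\<Sum>j<k. P i j * Q j i') = (if i = i' then 1 else 0)"
    and QP: "\<forall>j<k. \<forall>j'<k. (\<Sum>i<m. Q j i * P i j') = (if j = j' then 1 else 0)"
  shows "grp_iso (dpow m :: (nat \<Rightarrow> 'x) set) (dpow k)"
proof -
  define \<Phi> where "\<Phi> u = (\<lambda>j. if j < k then \<Sum>i<m. sm (u i) (P i j) else 0)" for u :: "nat \<Rightarrow> 'x"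
  define \<Psi> where "\<Psi> v = (\<lambda>i. if i < m then \<Sum>j<k. sm (v j) (Q j i) else 0)" for v :: "nat \<Rightarrow> 'x"
  have gen: "(\<lambda>j'. if j' < n2 then \<Sum>j<n1. sm (if j < n1 then \<Sum>i<n2. sm (u i) (R i j) else 0) (S j j') else 0) = u"
    if u: "u \<in> dpow n2" and RS: "\<forall>i<n2. \<forall>i'<n2. (\<Sum>j<n1. R i j * S j i') = (if i = i' then 1 else 0)"
    for u :: "nat \<Rightarrow> 'x" and n1 n2 and R S :: "nat \<Rightarrow> nat \<Rightarrow> 'a"
  proof
    fix i' show "(if i' < n2 then \<Sum>j<n1. sm (if j < n1 then \<Sum>i<n2. sm (u i) (R i j) else 0) (S j i') else 0) = u i'"
    proof (cases "i' < n2")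
      case False then show ?thesis using u by (simp add: dpow_def)
    next
      case True
      have "(\<Sum>j<n1. sm (if j < n1 then \<Sum>i<n2. sm (u i) (R i j) else 0) (S j i'))
          = (\<Sum>j<n1. \<Sum>i<n2. sm (u i) (R i j * S j i'))"
        by (rule sum.cong) (simp_all add: rm_sum1[OF rm] rm_mult[OF rm])
      also have "\<dots> = (\<Sum>i<n2. \<Sum>j<n1. sm (u i) (R i j * S j i'))" by (rule sum.swap)
      also have "\<dots> = (\<Sum>i<n2. sm (u i) (\<Sum>j<n1. R i j * S j i'))" by (simp add: rm_sum2[OF rm])
      also have "\<dots> = (\<Sum>i<n2. if i = i' then u i else 0)"
        by (rule sum.cong) (use RS True in \<open>simp_all add: rm_one[OF rm] rm_zero2[OF rm]\<close>)
      also have "\<dots> = u i'" using True by simp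
      finally show ?thesis using True by simp
    qed
  qed
  have PhiM: "\<Phi> u \<in> dpow k" for u by (simp add: \<Phi>_def dpow_def)
  have PsiM: "\<Psi> v \<in> dpow m" for v by (simp add: \<Psi>_def dpow_def)
  have PsiPhi: "\<Psi> (\<Phi> u) = u" if "u \<in> dpow m" for u
    using gen[OF that PQ] by (simp add: \<Psi>_def \<Phi>_def)
  have PhiPsi: "\<Phi> (\<Psi> v) = v" if "v \<in> dpow k" for v
    using gen[OF that QP] by (simp add: \<Psi>_def \<Phi>_def)
  have bij: "bij_betw \<Phi> (dpow m) (dpow k)"
    by (rule bij_betw_byWitness[where f'=\<Psi>]) (use PsiPhi PhiPsi PhiM PsiM in auto)
  have add: "\<forall>u\<in>dpow m. \<forall>v\<in>dpow m. \<Phi> (\<lambda>i. u i + v i) = (\<lambda>i. \<Phi> u i + \<Phi> v i)"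
    using rm by (auto simp: \<Phi>_def right_module_def sum.distrib fun_eq_iff)
  show ?thesis unfolding grp_iso_def using bij add by blast
qed



lemma shift_iso:
  fixes sm :: "'x::ab_group_add \<Rightarrow> 'a::ring_1 \<Rightarrow> 'x" and rho sigma :: "nat \<Rightarrow> 'a"
  assumes rm: "right_module sm"
    and rs: "\<forall>i\<le>r. \<forall>j\<le>r. rho j * sigma i = (if i = j then 1 else 0)"
    and ss: "(\<Sum>i\<le>r. sigma i * rho i) = 1"
    and n: "0 < n"
  shows "grp_iso (dpow n :: (nat \<Rightarrow> 'x) set) (dpow (n + r))"
proof (rule matrix_iso[OF rm])
  define P where "P i j = (if i = 0 then (if j \<le> r then sigma j else 0) else (if j = r + i then 1 else 0))" for i j
  define Q where "Q j i = (if j \<le> r then (if i = 0 then rho j else 0) else (if i + r = j then 1 else 0))" for i j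
  show "\<forall>i<n. \<forall>i'<n. (\<Sum>j<n + r. P i j * Q j i') = (if i = i' then 1 else 0)"
  proof (intro allI impI)
    fix i i' assume i: "i < n" and i': "i' < n"
    show "(\<Sum>j<n + r. P i j * Q j i') = (if i = i' then 1 else 0)"
    proof (cases "i = 0")
      case True
      have "(\<Sum>j<n + r. P i j * Q j i') = (\<Sum>j<n + r. if j \<in> {..r} then (if i' = 0 then sigma j * rho j else 0) else 0)"
        by (rule sum.cong) (auto simp: P_def Q_def True)
      also have "\<dots> = (\<Sum>j\<in>{..<n + r} \<inter> {..r}. (if i' = 0 then sigma j * rho j else 0))"
        by (simp add: sum.inter_restrict)
      also have "{..<n + r} \<inter> {..r} = {..r}" using n by auto
      also have "(\<Sum>j\<le>r. (if i' = 0 then sigma j * rho j else 0)) = (if i = i' then 1 else 0)"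
        using ss True by auto
      finally show ?thesis .
    next
      case False
      have "(\<Sum>j<n + r. P i j * Q j i') = (\<Sum>j<n + r. if j = r + i then (if i' = i then 1 else 0) else 0)"
        by (rule sum.cong) (use False in \<open>auto simp: P_def Q_def\<close>)
      also have "\<dots> = (if i = i' then 1 else 0)" using i by auto
      finally show ?thesis .
    qed
  qed
  show "\<forall>j<n + r. \<forall>j'<n + r. (\<Sum>i<n. Q j i * P i j') = (if j = j' then 1 else 0)"
  proof (intro allI impI)
    fix j j' assume j: "j < n + r" and j': "j' < n + r"
    show "(\<Sum>i<n. Q j i * P i j') = (if j = j' then 1 else 0)"
    proof (cases "j \<le> r")
      case True
      have "(\<Sum>i<n. Q j i * P i j') = (\<Sum>i<n. if i = 0 then (if j = j' then 1 else 0) else 0)"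
        by (rule sum.cong) (use True rs in \<open>auto simp: P_def Q_def\<close>)
      also have "\<dots> = (if j = j' then 1 else 0)" using n by auto
      finally show ?thesis .
    next
      case False
      have "(\<Sum>i<n. Q j i * P i j') = (\<Sum>i<n. if i = j - r then (if j = j' then 1 else 0) else 0)"
        by (rule sum.cong) (use False in \<open>auto simp: P_def Q_def\<close>)
      also have "\<dots> = (if j = j' then 1 else 0)" using j False by auto
      finally show ?thesis .
    qed
  qed
qed

lemma shift_iso_mult:
  fixes sm :: "'x::ab_group_add \<Rightarrow> 'a::ring_1 \<Rightarrow> 'x" and rho sigma :: "nat \<Rightarrow> 'a"
  assumes rm: "right_module sm"
    and rs: "\<forall>i\<le>r. \<forall>j\<le>r. rho j * sigma i = (if i = j then 1 else 0)"
    and ss: "(\<Sum>i\<le>r. sigma i * rho i) = 1"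
    and n: "0 < n"
  shows "grp_iso (dpow n :: (nat \<Rightarrow> 'x) set) (dpow (n + t * r))"
proof (induction t)
  case 0
  have "bij_betw id (dpow n :: (nat \<Rightarrow> 'x) set) (dpow n)" by simp
  then show ?case unfolding grp_iso_def by (intro exI[of _ id]) simp
next
  case (Suc t)
  have "grp_iso (dpow (n + t * r) :: (nat \<Rightarrow> 'x) set) (dpow (n + t * r + r))"
    by (rule shift_iso[OF rm rs ss]) (use n in simp)
  moreover have "n + Suc t * r = n + t * r + r" by simp
  ultimately show ?case using grp_iso_trans[OF Suc] by metis
qed



definition sumt :: "'b list \<Rightarrow> ('b \<Rightarrow> ('v, 'c::zero) ncterm) \<Rightarrow> ('v, 'c) ncterm" where
  "sumt xs f = foldr (\<lambda>t acc. Plus (f t) acc) xs (C 0)"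

lemma end_eval_simps:
  "end_eval sm F (V v) = F v"
  "end_eval sm F (C a) = (\<lambda>m. sm m a)"
  "end_eval sm F (Plus s t) = (\<lambda>m. end_eval sm F s m + end_eval sm F t m)"
  "end_eval sm F (Neg s) = (\<lambda>m. - end_eval sm F s m)"
  "end_eval sm F (Times s t) = end_eval sm F t \<circ> end_eval sm F s"
  by (simp_all add: end_eval_def)

lemma ring_eval_simps:
  "ring_eval cst s (V v) = s v"
  "ring_eval cst s (C a) = cst a"
  "ring_eval cst s (Plus p q) = ring_eval cst s p + ring_eval cst s q"
  "ring_eval cst s (Neg p) = - ring_eval cst s p"
  "ring_eval cst s (Times p q) = ring_eval cst s p * ring_eval cst s q"
  by (simp_all add: ring_eval_def)

lemma end_eval_sumt:
  assumes rm: "right_module sm"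
  shows "end_eval sm F (sumt xs f) = (\<lambda>x. \<Sum>t\<leftarrow>xs. end_eval sm F (f t) x)"
  by (induction xs) (auto simp: sumt_def end_eval_simps rm_zero2[OF rm])

lemma ring_eval_sumt:
  "ring_eval id s (sumt xs f) = (\<Sum>t\<leftarrow>xs. ring_eval id s (f t))"
  by (induction xs) (auto simp: sumt_def ring_eval_simps)

lemma sum_list_upt0: "(\<Sum>t\<leftarrow>[0..<k]. f t) = (\<Sum>t<k. f t)"
  by (simp add: sum_set_upt_conv_sum_list_nat[symmetric] atLeast0LessThan)

lemma closed_transfer:
  fixes sm :: "'m::ab_group_add \<Rightarrow> 'a::ring_1 \<Rightarrow> 'm"
  assumes rm: "right_module sm" and cl: "alg_closed_in_End sm"
    and iso: "grp_iso (dpow m :: (nat \<Rightarrow> 'm) set) (dpow k)"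
  shows "\<exists>P Q. (\<forall>i<m. \<forall>i'<m. (\<Sum>j<k. P i j * Q j i') = (if i = i' then 1 else (0::'a))) \<and>
     (\<forall>j<k. \<forall>j'<k. (\<Sum>i<m. Q j i * P i j') = (if j = j' then 1 else 0))"
proof -
  obtain \<phi> :: "(nat \<Rightarrow> 'm) \<Rightarrow> (nat \<Rightarrow> 'm)" where bij: "bij_betw \<phi> (dpow m) (dpow k)"
    and add: "\<forall>u\<in>dpow m. \<forall>v\<in>dpow m. \<phi> (\<lambda>i. u i + v i) = (\<lambda>i. \<phi> u i + \<phi> v i)"
    using iso unfolding grp_iso_def by blast
  define \<psi> where "\<psi> = inv_into (dpow m) \<phi>"
  have bij2: "bij_betw \<psi> (dpow k) (dpow m)" unfolding \<psi>_def using bij by (rule bij_betw_inv_into)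
  have add2: "\<forall>u\<in>dpow k. \<forall>v\<in>dpow k. \<psi> (\<lambda>i. u i + v i) = (\<lambda>i. \<psi> u i + \<psi> v i)"
    unfolding \<psi>_def by (rule inv_additive[OF bij add])
  have psiphi: "\<psi> (\<phi> u) = u" if "u \<in> dpow m" for u
    unfolding \<psi>_def by (rule inv_into_f_f[OF bij_betw_imp_inj_on[OF bij] that])
  have phipsi: "\<phi> (\<psi> u) = u" if "u \<in> dpow k" for u
    unfolding \<psi>_def by (rule bij_betw_inv_into_right[OF bij that])
  define e :: "nat \<Rightarrow> 'm \<Rightarrow> nat \<Rightarrow> 'm" where "e i x = (\<lambda>l. if l = i then x else 0)" for i x
  have e_mem: "i < n \<Longrightarrow> e i x \<in> dpow n" for i n x by (simp add: e_def dpow_def)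
  have decomp: "u = (\<lambda>l. \<Sum>j<n. e j (u j) l)" if "u \<in> dpow n" for u n
  proof
    fix l show "u l = (\<Sum>j<n. e j (u j) l)"
      using that by (cases "l < n") (simp_all add: e_def dpow_def)
  qed
  have e_add: "e i (x + y) = (\<lambda>l. e i x l + e i y l)" for i x y by (simp add: e_def fun_eq_iff)
  have comp1: "(\<Sum>j<k. \<psi> (e j (\<phi> (e i x) j)) i') = e i x i'" if "i < m" for i i' x
  proof -
    have m1: "\<phi> (e i x) \<in> dpow k" by (rule bij_betw_apply[OF bij e_mem[OF that]])
    have "(\<lambda>l. \<Sum>j<k. \<psi> (e j (\<phi> (e i x) j)) l) = \<psi> (\<lambda>l. \<Sum>j<k. e j (\<phi> (e i x) j) l)"
      by (rule hom_sum[OF _ _ add2, symmetric]) (auto intro: e_mem)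
    also have "\<dots> = \<psi> (\<phi> (e i x))" using decomp[OF m1] by simp
    also have "\<dots> = e i x" using psiphi e_mem[OF that] by simp
    finally have eq: "(\<lambda>l. \<Sum>j<k. \<psi> (e j (\<phi> (e i x) j)) l) = e i x" .
    show ?thesis using fun_cong[OF eq] by simp
  qed
  have comp2: "(\<Sum>i<m. \<phi> (e i (\<psi> (e j y) i)) j') = e j y j'" if "j < k" for j j' y
  proof -
    have m1: "\<psi> (e j y) \<in> dpow m" by (rule bij_betw_apply[OF bij2 e_mem[OF that]])
    have "(\<lambda>l. \<Sum>i<m. \<phi> (e i (\<psi> (e j y) i)) l) = \<phi> (\<lambda>l. \<Sum>i<m. e i (\<psi> (e j y) i) l)"
      by (rule hom_sum[OF _ _ add, symmetric]) (auto intro: e_mem)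
    also have "\<dots> = \<phi> (\<psi> (e j y))" using decomp[OF m1] by simp
    also have "\<dots> = e j y" using phipsi e_mem[OF that] by simp
    finally have eq: "(\<lambda>l. \<Sum>i<m. \<phi> (e i (\<psi> (e j y) i)) l) = e j y" .
    show ?thesis using fun_cong[OF eq] by simp
  qed
  define Fm where "Fm i j x = \<phi> (e i x) j" for i j x
  define Gm where "Gm j i y = \<psi> (e j y) i" for j i y
  have Fm_add: "additive (Fm i j)" if "i < m" for i j
  proof -
    have "\<phi> (e i (x + y)) = (\<lambda>l. \<phi> (e i x) l + \<phi> (e i y) l)" for x y
      using add e_mem[OF that] by (simp add: e_add)
    then show ?thesis by (simp add: additive_def Fm_def)
  qed
  have Gm_add: "additive (Gm j i)" if "j < k" for i j
  proof -
    have "\<psi> (e j (x + y)) = (\<lambda>l. \<psi> (e j x) l + \<psi> (e j y) l)" for x y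
      using add2 e_mem[OF that] by (simp add: e_add)
    then show ?thesis by (simp add: additive_def Gm_def)
  qed
  define fv where "fv i j = to_nat (False, i::nat, j::nat)" for i j
  define gv where "gv j i = to_nat (True, j::nat, i::nat)" for j i
  define F where "F v = (case (from_nat v :: bool \<times> nat \<times> nat) of (b, a, c) \<Rightarrow>
      if b then (if a < k then Gm a c else (\<lambda>_. 0)) else (if a < m then Fm a c else (\<lambda>_. 0)))" for v
  have F_fv: "i < m \<Longrightarrow> F (fv i j) = Fm i j" for i j by (simp add: F_def fv_def)
  have F_gv: "j < k \<Longrightarrow> F (gv j i) = Gm j i" for i j by (simp add: F_def gv_def)
  have F_add: "additive (F v)" for v
    using Fm_add Gm_add by (auto simp: F_def additive_def split: prod.splits)
  define eq1 :: "nat \<Rightarrow> nat \<Rightarrow> (nat, 'a) ncterm" where "eq1 i i' = (if i = i' then Plus (sumt [0..<k] (\<lambda>j. Times (V (fv i j)) (V (gv j i')))) (Neg (C 1))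
        else sumt [0..<k] (\<lambda>j. Times (V (fv i j)) (V (gv j i'))))" for i i'
  define eq2 :: "nat \<Rightarrow> nat \<Rightarrow> (nat, 'a) ncterm" where "eq2 j j' = (if j = j' then Plus (sumt [0..<m] (\<lambda>i. Times (V (gv j i)) (V (fv i j')))) (Neg (C 1))
        else sumt [0..<m] (\<lambda>i. Times (V (gv j i)) (V (fv i j'))))" for j j'
  define ps :: "(nat, 'a) ncterm list" where
    "ps = concat (map (\<lambda>i. map (eq1 i) [0..<m]) [0..<m]) @ concat (map (\<lambda>j. map (eq2 j) [0..<k]) [0..<k])"
  have set_ps: "set ps = {eq1 i i' | i i'. i < m \<and> i' < m} \<union> {eq2 j j' | j j'. j < k \<and> j' < k}"
    unfolding ps_def by auto
  have sol: "\<forall>p\<in>set ps. end_eval sm F p = (\<lambda>_. 0)"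
  proof -
    have "end_eval sm F (eq1 i i') = (\<lambda>_. 0)" if "i < m" "i' < m" for i i'
    proof -
      have "end_eval sm F (sumt [0..<k] (\<lambda>j. Times (V (fv i j)) (V (gv j i')))) = (\<lambda>x. e i x i')"
        using comp1[OF that(1)] that(1)
        by (simp add: end_eval_sumt[OF rm] sum_list_upt0 end_eval_simps F_fv F_gv Fm_def Gm_def)
      then show ?thesis by (cases "i = i'") (simp_all add: eq1_def end_eval_simps rm_one[OF rm] e_def fun_eq_iff)
    qed
    moreover have "end_eval sm F (eq2 j j') = (\<lambda>_. 0)" if "j < k" "j' < k" for j j'
    proof -
      have "end_eval sm F (sumt [0..<m] (\<lambda>i. Times (V (gv j i)) (V (fv i j')))) = (\<lambda>x. e j x j')"
        using comp2[OF that(1)] that(1)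
        by (simp add: end_eval_sumt[OF rm] sum_list_upt0 end_eval_simps F_fv F_gv Fm_def Gm_def)
      then show ?thesis by (cases "j = j'") (simp_all add: eq2_def end_eval_simps rm_one[OF rm] e_def fun_eq_iff)
    qed
    ultimately show ?thesis unfolding set_ps by blast
  qed
  obtain s where s: "\<forall>p\<in>set ps. ring_eval id s p = 0"
    using cl sol F_add unfolding alg_closed_in_End_def by blast
  define P where "P i j = s (fv i j)" for i j
  define Q where "Q j i = s (gv j i)" for j i
  have "(\<Sum>j<k. P i j * Q j i') = (if i = i' then 1 else 0)" if "i < m" "i' < m" for i i'
  proof -
    have "ring_eval id s (eq1 i i') = 0" using s that unfolding set_ps by blast
    then show ?thesis
      by (simp add: eq1_def ring_eval_sumt ring_eval_simps sum_list_upt0 P_def Q_def split: if_splits)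
  qed
  moreover have "(\<Sum>i<m. Q j i * P i j') = (if j = j' then 1 else 0)" if "j < k" "j' < k" for j j'
  proof -
    have "ring_eval id s (eq2 j j') = 0" using s that unfolding set_ps by blast
    then show ?thesis
      by (simp add: eq2_def ring_eval_sumt ring_eval_simps sum_list_upt0 P_def Q_def split: if_splits)
  qed
  ultimately show ?thesis by blast
qed

theorem proposition3p1:
  fixes r :: nat and rho sigma :: "nat \<Rightarrow> 'a::ring_1"
    and smG :: "'g::ab_group_add \<Rightarrow> 'a \<Rightarrow> 'g"
    and smH :: "'h::ab_group_add \<Rightarrow> 'a \<Rightarrow> 'h"
    and Bn :: "nat \<Rightarrow> 'h set" and b :: "nat \<Rightarrow> nat \<Rightarrow> 'h" and q :: "'h \<Rightarrow> 'g"
    and E :: "'i::wellorder set" and eta :: "'i \<Rightarrow> nat \<Rightarrow> 'i"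
    and smM :: "'m::ab_group_add \<Rightarrow> 'a \<Rightarrow> 'm"
    and Mf :: "'i \<Rightarrow> 'm set" and x :: "'i \<Rightarrow> nat \<Rightarrow> 'm" and th :: "'i \<Rightarrow> 'h \<Rightarrow> 'm"
  assumes r_pos: "0 < r"
    and A: "is_Ar r rho sigma"
    and G: "corner_group r smG"
    and HB: "HB_data smH Bn b"
    and q_hom: "module_hom smH smG q" and q_surj: "surj q"
    and q_ker: "\<forall>h. q h = 0 \<longleftrightarrow> h \<in> (\<Union>n. Bn n)"
    and w1: "omega1_type TYPE('i)"
    and E_stat: "stationary E" and E_lim: "\<forall>d\<in>E. is_limit d"
    and ladder: "ladder_system E eta"
    and M_mod: "right_module smM"
    and M: "M_construction smH (\<Union>n. Bn n) b E eta smM Mf x th"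
    and closed: "alg_closed_in_End smM"
  shows "\<forall>m k. 0 < m \<longrightarrow> 0 < k \<longrightarrow>
           (grp_iso (dpow m :: (nat \<Rightarrow> 'm) set) (dpow k) \<longleftrightarrow> m mod r = k mod r)"
proof (intro allI impI)
  fix m k :: nat assume m: "0 < m" and k: "0 < k"
  have rs: "\<forall>i\<le>r. \<forall>j\<le>r. rho j * sigma i = (if i = j then 1 else 0)"
    and ss: "(\<Sum>i\<le>r. sigma i * rho i) = 1" using A unfolding is_Ar_def by blast+
  have rmG: "right_module smG" using G unfolding corner_group_def by blast
  have cornerNo: "\<forall>l n. 1 \<le> l \<longrightarrow> l < n \<longrightarrow> n \<le> r \<longrightarrow> \<not> grp_iso (dpow l :: (nat \<Rightarrow> 'g) set) (dpow n)"
    using G unfolding corner_group_def by blast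
  have perG: "grp_iso (dpow n :: (nat \<Rightarrow> 'g) set) (dpow (n + t * r))" if "0 < n" for n t
    by (rule shift_iso_mult[OF rmG rs ss that])
  have perM: "grp_iso (dpow n :: (nat \<Rightarrow> 'm) set) (dpow (n + t * r))" if "0 < n" for n t
    by (rule shift_iso_mult[OF M_mod rs ss that])
  show "grp_iso (dpow m :: (nat \<Rightarrow> 'm) set) (dpow k) \<longleftrightarrow> m mod r = k mod r"
  proof
    assume iso: "grp_iso (dpow m :: (nat \<Rightarrow> 'm) set) (dpow k)"
    obtain P Q :: "nat \<Rightarrow> nat \<Rightarrow> 'a" where
      PQ: "\<forall>i<m. \<forall>i'<m. (\<Sum>j<k. P i j * Q j i') = (if i = i' then 1 else 0)" and
      QP: "\<forall>j<k. \<forall>j'<k. (\<Sum>i<m. Q j i * P i j') = (if j = j' then 1 else 0)"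
      using closed_transfer[OF M_mod closed iso] by blast
    have isoG: "grp_iso (dpow m :: (nat \<Rightarrow> 'g) set) (dpow k)"
      by (rule matrix_iso[OF rmG PQ QP])
    define m' where "m' = (m - 1) mod r + 1"
    define tm where "tm = (m - 1) div r"
    define k' where "k' = (k - 1) mod r + 1"
    define tk where "tk = (k - 1) div r"
    have "tm * r + (m - 1) mod r = m - 1" unfolding tm_def by (rule div_mult_mod_eq)
    then have mdec: "m = m' + tm * r" using m unfolding m'_def by linarith
    have "tk * r + (k - 1) mod r = k - 1" unfolding tk_def by (rule div_mult_mod_eq)
    then have kdec: "k = k' + tk * r" using k unfolding k'_def by linarith
    have m'r: "1 \<le> m'" "m' \<le> r" using r_pos unfolding m'_def
      by (simp_all add: Suc_le_eq)
    have k'r: "1 \<le> k'" "k' \<le> r" using r_pos unfolding k'_def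
      by (simp_all add: Suc_le_eq)
    have i1: "grp_iso (dpow m' :: (nat \<Rightarrow> 'g) set) (dpow m)"
      using perG[of m' tm] m'r mdec by simp
    have i2: "grp_iso (dpow k' :: (nat \<Rightarrow> 'g) set) (dpow k)"
      using perG[of k' tk] k'r kdec by simp
    have i3: "grp_iso (dpow m' :: (nat \<Rightarrow> 'g) set) (dpow k')"
      using grp_iso_trans[OF grp_iso_trans[OF i1 isoG] grp_iso_sym[OF i2]] .
    have "m' = k'"
    proof (rule ccontr)
      assume ne: "m' \<noteq> k'"
      show False
      proof (cases "m' < k'")
        case True then show False using cornerNo i3 m'r k'r by blast
      next
        case False then have "k' < m'" using ne by simp
        then show False using cornerNo grp_iso_sym[OF i3] m'r k'r by blast
      qed
    qed
    then show "m mod r = k mod r" using mdec kdec by simp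
  next
    assume eq: "m mod r = k mod r"
    have main: "grp_iso (dpow a :: (nat \<Rightarrow> 'm) set) (dpow b)"
      if "0 < a" "a \<le> b" "a mod r = b mod r" for a b
    proof -
      have "r dvd b - a" using that mod_eq_dvd_iff_nat[of a b r] by simp
      then obtain t where t: "b - a = r * t" by blast
      then have "b = a + t * r" using that by (simp add: mult.commute)
      then show ?thesis using perM[OF that(1), of t] by simp
    qed
    show "grp_iso (dpow m :: (nat \<Rightarrow> 'm) set) (dpow k)"
    proof (cases "m \<le> k")
      case True then show ?thesis using main m eq by blast
    next
      case False then show ?thesis using main[of k m] k eq grp_iso_sym by simp
    qed
  qed
qed

end
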